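(* Let $\mathcal{A}$ be a complex Banach algebra with identity, $a\in\mathcal{A}$, and $(a_n)$ a sequence in $\mathcal{A}$ with $a_n\overset{\nu}{\to}a$. If $U\subseteq\mathbb{C}$ is an open set with $0\notin U$ such that $U$ contains a connected component of $\sigma(a)$, then there exists $n_0\in\mathbb{N}$ such that for all $n\geq n_0$, $U$ contains a connected component of $\sigma(a_n)$.
   Context: $\sigma(x)$ is the spectrum of $x$ in $\mathcal{A}$. A sequence $(x_n)$ in $\mathcal{A}$ is $\nu$-convergent to $x$, written $x_n\overset{\nu}{\to}x$, if $(\|x_n\|)$ is bounded, $\|(x_n-x)x\|\to0$ and $\|(x_n-x)x_n\|\to0$. *)

theory Defs
  imports "HOL-Analysis.Analysis"
begin

text \<open>A complex Banach
  algebra with identity is then a type of class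
  complex_normed_algebra_1 and banach.\<close>

class complex_normed_algebra_1 = real_normed_algebra_1 +
  fixes scaleC :: "complex \<Rightarrow> 'a \<Rightarrow> 'a"
  assumes scaleC_add_right: "scaleC c (x + y) = scaleC c x + scaleC c y"
    and scaleC_add_left: "scaleC (c + d) x = scaleC c x + scaleC d x"
    and scaleC_scaleC: "scaleC c (scaleC d x) = scaleC (c * d) x"
    and scaleC_one: "scaleC 1 x = x"
    and scaleC_of_real: "scaleC (complex_of_real r) x = scaleR r x"
    and norm_scaleC: "norm (scaleC c x) = cmod c * norm x"
    and mult_scaleC_left: "scaleC c x * y = scaleC c (x * y)"
    and mult_scaleC_right: "x * scaleC c y = scaleC c (x * y)"

definition ba_invertible :: "'a::ring_1 \<Rightarrow> bool" where
  "ba_invertible x \<longleftrightarrow> (\<exists>y. x * y = 1 \<and> y * x = 1)"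

definition spectrum :: "'a::complex_normed_algebra_1 \<Rightarrow> complex set" where
  "spectrum x = {z. \<not> ba_invertible (scaleC z 1 - x)}"

definition nu_conv :: "(nat \<Rightarrow> 'a::real_normed_algebra) \<Rightarrow> 'a \<Rightarrow> bool" where
  "nu_conv xs x \<longleftrightarrow> (\<exists>M. \<forall>n. norm (xs n) \<le> M)
     \<and> (\<lambda>n. norm ((xs n - x) * x)) \<longlonglongrightarrow> 0
     \<and> (\<lambda>n. norm ((xs n - x) * xs n)) \<longlonglongrightarrow> 0"

end

theory Submission
  imports Defs
begin


definition cc :: "complex \<Rightarrow> 'a::complex_normed_algebra_1" where
  "cc c = scaleC c 1"

lemma scaleC_cc: "scaleC c x = cc c * (x::'a::complex_normed_algebra_1)"
  by (simp add: cc_def mult_scaleC_left)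

lemma cc_add: "cc (c + d) = (cc c + cc d :: 'a::complex_normed_algebra_1)"
  by (simp add: cc_def scaleC_add_left)

lemma cc_mult: "cc (c * d) = (cc c * cc d :: 'a::complex_normed_algebra_1)"
  by (simp add: cc_def mult_scaleC_left scaleC_scaleC)

lemma cc_one [simp]: "cc 1 = (1 :: 'a::complex_normed_algebra_1)"
  by (simp add: cc_def scaleC_one)

lemma cc_zero [simp]: "cc 0 = (0 :: 'a::complex_normed_algebra_1)"
  by (metis add_cancel_right_right add_0 cc_add)

lemma cc_minus: "cc (- c) = (- cc c :: 'a::complex_normed_algebra_1)"
  by (metis add.right_inverse cc_add cc_zero eq_neg_iff_add_eq_0)

lemma cc_diff: "cc (c - d) = (cc c - cc d :: 'a::complex_normed_algebra_1)"
  by (simp only: diff_conv_add_uminus cc_add cc_minus)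

lemma norm_cc [simp]: "norm (cc c :: 'a::complex_normed_algebra_1) = cmod c"
  by (simp add: cc_def norm_scaleC)

lemma cc_commute: "cc c * x = x * (cc c :: 'a::complex_normed_algebra_1)"
  by (simp add: cc_def mult_scaleC_left mult_scaleC_right)

lemma cc_power: "cc (c ^ k) = (cc c ^ k :: 'a::complex_normed_algebra_1)"
  by (induction k) (simp_all add: cc_mult)

lemma cc_sum: "cc (sum f A) = (sum (\<lambda>j. cc (f j)) A :: 'a::complex_normed_algebra_1)"
  by (induction A rule: infinite_finite_induct) (simp_all add: cc_add)

lemma cc_of_nat: "cc (of_nat n) = (of_nat n :: 'a::complex_normed_algebra_1)"
  by (induction n) (simp_all add: cc_add)

lemma cc_mult_power: "(cc c * x) ^ k = cc (c ^ k) * (x ^ k :: 'a::complex_normed_algebra_1)"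
proof (induction k)
  case (Suc k)
  have "(cc c * x) ^ Suc k = cc c * x * (cc (c ^ k) * x ^ k)" by (simp add: Suc)
  also have "\<dots> = cc c * cc (c^k) * (x * x ^ k)"
    by (metis cc_commute mult.assoc)
  finally show ?case by (simp add: cc_mult)
qed simp

definition ba_inv :: "'a::ring_1 \<Rightarrow> 'a" where
  "ba_inv x = (SOME y. x * y = 1 \<and> y * x = 1)"

lemma ba_inv:
  assumes "ba_invertible x"
  shows "x * ba_inv x = 1" "ba_inv x * x = 1"
  using someI_ex[OF assms[unfolded ba_invertible_def]] by (auto simp: ba_inv_def)

lemma ba_inv_unique:
  assumes "x * y = 1" "y * x = (1::'a::ring_1)"
  shows "ba_invertible x" "ba_inv x = y"
proof -
  show inv: "ba_invertible x" using assms by (auto simp: ba_invertible_def)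
  have "ba_inv x = ba_inv x * (x * y)" by (simp add: assms)
  also have "\<dots> = y" by (metis ba_inv(2)[OF inv] mult.assoc mult_1_left)
  finally show "ba_inv x = y" .
qed

lemma left_right_inv:
  assumes "x * y = 1" "z * x = (1::'a::ring_1)"
  shows "ba_invertible x" "ba_inv x = y"
proof -
  have "z = y" by (metis assms mult.assoc mult_1_left mult_1_right)
  then show "ba_invertible x" "ba_inv x = y" using ba_inv_unique assms by auto
qed

lemma neumann:
  fixes x :: "'a::{real_normed_algebra_1, banach}"
  assumes "norm x < 1"
  shows "(\<lambda>k. x ^ k) sums ba_inv (1 - x)" "ba_invertible (1 - x)"
        "norm (ba_inv (1 - x)) \<le> 1 / (1 - norm x)"
proof -
  have sg: "summable (\<lambda>k. norm x ^ k)" using assms by (simp add: summable_geometric)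
  have sn: "summable (\<lambda>k. norm (x ^ k))"
    by (rule summable_comparison_test[OF _ sg]) (auto intro: norm_power_ineq)
  then have s: "summable (\<lambda>k. x ^ k)" by (rule summable_norm_cancel)
  define S where "S = suminf (\<lambda>k. x ^ k)"
  have t: "(\<lambda>k. x ^ k - x ^ Suc k) sums (x ^ 0 - 0)"
    by (rule telescope_sums') (rule LIMSEQ_power_zero[OF assms])
  have "(\<lambda>k. x ^ k * (1 - x)) sums (S * (1 - x))"
    using s unfolding S_def by (intro sums_mult2) (simp add: summable_sums)
  moreover have "(\<lambda>k. x ^ k * (1 - x)) = (\<lambda>k. x ^ k - x ^ Suc k)"
    by (simp add: algebra_simps power_commutes)
  ultimately have 1: "S * (1 - x) = 1" using t sums_unique2 by fastforce
  have "(\<lambda>k. (1 - x) * x ^ k) sums ((1 - x) * S)"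
    using s unfolding S_def by (intro sums_mult) (simp add: summable_sums)
  moreover have "(\<lambda>k. (1 - x) * x ^ k) = (\<lambda>k. x ^ k - x ^ Suc k)"
    by (simp add: algebra_simps power_commutes)
  ultimately have 2: "(1 - x) * S = 1" using t sums_unique2 by fastforce
  have inv: "ba_invertible (1 - x)" "ba_inv (1 - x) = S" using ba_inv_unique[OF 2 1] by auto
  then show "(\<lambda>k. x ^ k) sums ba_inv (1 - x)" "ba_invertible (1 - x)"
    using s S_def by (auto simp: summable_sums)
  have "norm S \<le> (\<Sum>k. norm (x ^ k))" unfolding S_def by (rule summable_norm[OF sn])
  also have "\<dots> \<le> (\<Sum>k. norm x ^ k)"
    by (rule suminf_le[OF _ sn sg]) (simp add: norm_power_ineq)
  also have "\<dots> = 1 / (1 - norm x)" using assms by (simp add: suminf_geometric)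
  finally show "norm (ba_inv (1 - x)) \<le> 1 / (1 - norm x)" using inv by simp
qed



lemma perturb:
  fixes y h :: "'a::{real_normed_algebra_1,banach}"
  assumes y: "ba_invertible y" and sm: "norm (ba_inv y) * norm h \<le> 1/2"
  shows "ba_invertible (y + h)" "norm (ba_inv (y + h)) \<le> 2 * norm (ba_inv y)"
        "norm (ba_inv (y + h) - ba_inv y) \<le> 2 * norm (ba_inv y)^2 * norm h"
proof -
  define N where "N = ba_inv y"
  define x where "x = - (N * h)"
  have yN: "y * N = 1" "N * y = 1" using ba_inv[OF y] by (auto simp: N_def)
  have nx: "norm x \<le> 1/2" using sm norm_mult_ineq[of N h] by (simp add: x_def N_def)
  then have nx1: "norm x < 1" by simp
  define S where "S = ba_inv (1 - x)"
  have S: "S * (1 - x) = 1" "(1 - x) * S = 1" using ba_inv[OF neumann(2)[OF nx1]] by (auto simp: S_def)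
  have nS: "norm S \<le> 2"
  proof -
    have "norm S \<le> 1 / (1 - norm x)" using neumann(3)[OF nx1] by (simp add: S_def)
    also have "\<dots> \<le> 2" using nx by (simp add: field_simps)
    finally show ?thesis .
  qed
  have yx: "y * (1 - x) = y + h"
    by (simp add: x_def algebra_simps mult.assoc[symmetric] yN)
  have r: "(y + h) * (S * N) = 1"
    by (metis yx S(2) yN(1) mult.assoc mult_1_left)
  have l: "(S * N) * (y + h) = 1"
    by (metis yx S(1) yN(2) mult.assoc mult_1_left)
  have inv: "ba_invertible (y + h)" "ba_inv (y + h) = S * N" using ba_inv_unique[OF r l] by auto
  then show "ba_invertible (y + h)" by simp
  have nSN: "norm (S * N) \<le> 2 * norm N"
    using norm_mult_ineq[of S N] nS mult_right_mono[OF nS, of "norm N"] by simp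
  then show "norm (ba_inv (y + h)) \<le> 2 * norm (ba_inv y)" using inv N_def by simp
  have "S * N - N = - ((S * N) * h * N)"
  proof -
    have "(S * N) * (y + h) * N = N" using l by simp
    then have "S * N * y * N + S * N * h * N = N" by (simp add: algebra_simps)
    moreover have "S * N * y * N = S * N" by (simp add: mult.assoc yN)
    ultimately show ?thesis by (simp add: algebra_simps)
  qed
  then have "norm (ba_inv (y + h) - ba_inv y) = norm ((S * N) * h * N)" using inv N_def by simp
  also have "\<dots> \<le> norm (S * N) * norm h * norm N"
    by (metis norm_mult_ineq mult_right_mono norm_ge_zero order_trans)
  also have "\<dots> \<le> 2 * norm N * norm h * norm N"
    by (intro mult_right_mono nSN) auto
  finally show "norm (ba_inv (y + h) - ba_inv y) \<le> 2 * norm (ba_inv y)^2 * norm h"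
    by (simp add: N_def power2_eq_square mult_ac)
qed

lemma almost_inv:
  fixes x X e1 e2 :: "'a::{real_normed_algebra_1,banach}"
  assumes "x * X = 1 - e1" "X * x = 1 - e2" "norm e1 \<le> 1/2" "norm e2 \<le> 1/2"
  shows "ba_invertible x" "norm (ba_inv x) \<le> 2 * norm X"
proof -
  have n1: "norm e1 < 1" "norm e2 < 1" using assms by auto
  have r: "x * (X * ba_inv (1 - e1)) = 1"
    by (metis assms(1) ba_inv(1) mult.assoc n1(1) neumann(2))
  have l: "(ba_inv (1 - e2) * X) * x = 1"
    by (metis assms(2) ba_inv(2) mult.assoc n1(2) neumann(2))
  have inv: "ba_invertible x" "ba_inv x = X * ba_inv (1 - e1)" using left_right_inv[OF r l] by auto
  then show "ba_invertible x" by simp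
  have b: "norm (ba_inv (1 - e1)) \<le> 2"
  proof -
    have "norm (ba_inv (1 - e1)) \<le> 1 / (1 - norm e1)" using neumann(3)[OF n1(1)] .
    also have "\<dots> \<le> 2" using assms(3) by (simp add: field_simps)
    finally show ?thesis .
  qed
  show "norm (ba_inv x) \<le> 2 * norm X"
    unfolding inv(2)
    by (metis b mult.commute mult_left_mono norm_ge_zero norm_mult_ineq order_trans)
qed

definition res :: "'a::complex_normed_algebra_1 \<Rightarrow> complex \<Rightarrow> 'a" where
  "res b z = ba_inv (cc z - b)"

lemma spec_iff: "z \<in> spectrum b \<longleftrightarrow> \<not> ba_invertible (cc z - b)"
  by (simp add: spectrum_def cc_def)

lemma cc_inv: "c \<noteq> 0 \<Longrightarrow> ba_invertible (cc c :: 'a::complex_normed_algebra_1) \<and> ba_inv (cc c :: 'a) = cc (1 / c)"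
  using ba_inv_unique[of "cc c :: 'a" "cc (1/c)"] by (simp add: cc_mult[symmetric])

lemma spec_bounded:
  fixes b :: "'a::{complex_normed_algebra_1,banach}"
  assumes "2 * norm b < cmod z"
  shows "z \<notin> spectrum b"
proof -
  have z: "z \<noteq> 0" using assms by auto
  have eq: "ba_inv (cc z :: 'a) = cc (1/z)" using cc_inv[OF z] by blast
  have "norm (ba_inv (cc z :: 'a)) * norm (- b) \<le> 1/2"
    unfolding eq using assms z by (simp add: norm_divide field_simps)
  then have "ba_invertible (cc z + - b)" using perturb(1) cc_inv[OF z] by blast
  then show ?thesis by (simp add: spec_iff)
qed

lemma res_perturb:
  fixes b :: "'a::{complex_normed_algebra_1,banach}"
  assumes "z \<notin> spectrum b" "norm (res b z) * cmod (w - z) \<le> 1/2"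
  shows "w \<notin> spectrum b" "norm (res b w) \<le> 2 * norm (res b z)"
        "norm (res b w - res b z) \<le> 2 * norm (res b z)^2 * cmod (w - z)"
proof -
  have e: "cc w - b = (cc z - b) + cc (w - z)" by (simp add: cc_diff)
  have i: "ba_invertible (cc z - b)" using assms by (simp add: spec_iff)
  note p = perturb[OF i, of "cc (w - z)"]
  show "w \<notin> spectrum b" "norm (res b w) \<le> 2 * norm (res b z)"
        "norm (res b w - res b z) \<le> 2 * norm (res b z)^2 * cmod (w - z)"
    using p assms(2) by (auto simp: spec_iff res_def e)
qed

lemma res_lower:
  fixes b :: "'a::{complex_normed_algebra_1,banach}"
  assumes "z \<in> spectrum b" "w \<notin> spectrum b"
  shows "1/2 < norm (res b w) * cmod (z - w)"
  using res_perturb(1)[OF assms(2), of z] assms(1) by force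

lemma spec_closed:
  fixes b :: "'a::{complex_normed_algebra_1,banach}"
  shows "closed (spectrum b)"
  unfolding closed_def open_dist
proof (intro ballI)
  fix z assume "z \<in> - spectrum b"
  then have z: "z \<notin> spectrum b" by simp
  define e where "e = 1 / (2 * (norm (res b z) + 1))"
  have e: "e > 0" unfolding e_def using norm_ge_zero[of "res b z"] by (simp add: add_nonneg_pos)
  have "w \<in> - spectrum b" if "dist w z < e" for w
  proof -
    have "norm (res b z) * cmod (w - z) \<le> (norm (res b z) + 1) * e"
      using that by (intro mult_mono) (auto simp: dist_norm)
    also have "\<dots> \<le> 1/2" unfolding e_def using norm_ge_zero[of "res b z"] by (simp add: field_simps)
    finally show ?thesis using res_perturb(1)[OF z] by auto
  qed
  then show "\<exists>e>0. \<forall>y. dist y z < e \<longrightarrow> y \<in> - spectrum b" using e by blast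
qed

lemma spec_compact:
  fixes b :: "'a::{complex_normed_algebra_1,banach}"
  shows "compact (spectrum b)"
proof -
  have "spectrum b \<subseteq> cball 0 (2 * norm b)"
    using spec_bounded[of b] by (force simp: not_less)
  then show ?thesis using spec_closed bounded_cball bounded_subset compact_eq_bounded_closed by metis
qed

lemma res_cont:
  fixes b :: "'a::{complex_normed_algebra_1,banach}"
  shows "continuous_on (- spectrum b) (res b)"
proof (rule continuous_at_imp_continuous_on, intro ballI)
  fix z assume "z \<in> - spectrum b"
  then have z: "z \<notin> spectrum b" by simp
  define r where "r = norm (res b z) + 1"
  have r: "r > 0" unfolding r_def using norm_ge_zero[of "res b z"] by linarith
  show "isCont (res b) z"
    unfolding continuous_at_eps_delta
  proof (intro allI impI)
    fix e :: real assume e: "e > 0"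
    define d where "d = min (1 / (2 * r)) (e / (2 * r^2))"
    have d: "d > 0" using e r by (simp add: d_def)
    have "dist (res b w) (res b z) < e" if "dist w z < d" for w
    proof -
      have wz: "cmod (w - z) < d" using that by (simp add: dist_norm)
      have "norm (res b z) * cmod (w - z) \<le> r * d"
        using wz by (intro mult_mono) (auto simp: r_def)
      also have "\<dots> \<le> 1/2" using r by (simp add: d_def field_simps min_def)
      finally have h: "norm (res b z) * cmod (w - z) \<le> 1/2" .
      have "dist (res b w) (res b z) \<le> 2 * norm (res b z)^2 * cmod (w - z)"
        using res_perturb(3)[OF z h] by (simp add: dist_norm)
      also have "\<dots> \<le> 2 * r^2 * cmod (w - z)"
        by (intro mult_right_mono mult_left_mono power_mono) (auto simp: r_def)
      also have "\<dots> < 2 * r^2 * d" using wz r by simp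
      also have "\<dots> \<le> e" using r by (simp add: d_def field_simps min_def)
      finally show ?thesis .
    qed
    then show "\<exists>d>0. \<forall>w. dist w z < d \<longrightarrow> dist (res b w) (res b z) < e" using d by blast
  qed
qed



lemma norm_cc_mult: "norm (cc c * x) = cmod c * norm (x::'a::complex_normed_algebra_1)"
  by (metis norm_scaleC scaleC_cc)

lemma res_commute:
  fixes b :: "'a::{complex_normed_algebra_1,banach}"
  assumes "z \<notin> spectrum b"
  shows "b * res b z = res b z * b" "(cc z - b) * res b z = 1" "res b z * (cc z - b) = 1"
proof -
  have i: "ba_invertible (cc z - b)" using assms by (simp add: spec_iff)
  note r = ba_inv[OF i, folded res_def]
  show "(cc z - b) * res b z = 1" "res b z * (cc z - b) = 1" using r by auto
  have c: "b * (cc z - b) = (cc z - b) * b" by (simp add: algebra_simps cc_commute)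
  have "res b z * b = res b z * b * ((cc z - b) * res b z)" using r by simp
  also have "\<dots> = res b z * (b * (cc z - b)) * res b z" by (simp add: mult.assoc)
  also have "\<dots> = res b z * (cc z - b) * b * res b z" by (simp add: c mult.assoc)
  also have "\<dots> = b * res b z" using r by simp
  finally show "b * res b z = res b z * b" by simp
qed

lemma upper_uniform:
  fixes a :: "'a::{complex_normed_algebra_1,banach}" and as :: "nat \<Rightarrow> 'a"
  assumes nu: "nu_conv as a" and G: "compact G" "G \<inter> spectrum a = {}" "0 \<notin> G"
  shows "\<exists>n1 B. \<forall>n\<ge>n1. \<forall>z\<in>G. z \<notin> spectrum (as n) \<and> norm (res (as n) z) \<le> B"
proof (cases "G = {}")
  case True then show ?thesis by auto
next
  case False
  have "continuous_on G (\<lambda>z. norm (res a z))"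
    using continuous_on_subset[OF res_cont[of a]] G(2)
    by (intro continuous_on_norm) auto
  then obtain z0 where "z0 \<in> G" "\<forall>z\<in>G. norm (res a z) \<le> norm (res a z0)"
    using continuous_attains_sup[OF G(1) False] by blast
  then obtain B0 where B0: "\<forall>z\<in>G. norm (res a z) \<le> B0" "B0 \<ge> 0" using norm_ge_zero by blast
  have "continuous_on G cmod" by (intro continuous_intros)
  then obtain z1 where z1: "z1 \<in> G" "\<forall>z\<in>G. cmod z1 \<le> cmod z"
    using continuous_attains_inf[OF G(1) False] by blast
  define d0 where "d0 = cmod z1"
  have d0: "d0 > 0" "\<forall>z\<in>G. d0 \<le> cmod z" using z1 G(3) by (auto simp: d0_def)
  obtain M where M: "\<forall>n. norm (as n) \<le> M" using nu by (auto simp: nu_conv_def)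
  define Mb where "Mb = M + norm a"
  define b where "b n = as n - a" for n
  have nb: "norm (b n) \<le> Mb" for n
    using M norm_triangle_ineq4[of "as n" a] by (simp add: b_def Mb_def) (smt (verit) M)
  have Mb0: "Mb \<ge> 0" using nb[of 0] norm_ge_zero[of "b 0"] by linarith
  have t1: "(\<lambda>n. norm (b n * a)) \<longlonglongrightarrow> 0" and t2: "(\<lambda>n. norm (b n * as n)) \<longlonglongrightarrow> 0"
    using nu by (auto simp: nu_conv_def b_def)
  have bb: "b n * b n = b n * as n - b n * a" for n by (simp add: b_def algebra_simps)
  have t3: "(\<lambda>n. norm (b n * b n)) \<longlonglongrightarrow> 0"
  proof (rule tendsto_sandwich[of "\<lambda>n. 0" _ _ "\<lambda>n. norm (b n * as n) + norm (b n * a)"])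
    show "\<forall>\<^sub>F n in sequentially. 0 \<le> norm (b n * b n)" by simp
    show "\<forall>\<^sub>F n in sequentially. norm (b n * b n) \<le> norm (b n * as n) + norm (b n * a)"
      by (simp add: bb norm_triangle_ineq4)
    show "(\<lambda>n. norm (b n * as n) + norm (b n * a)) \<longlonglongrightarrow> 0"
      using tendsto_add[OF t2 t1] by simp
  qed auto
  define eta where "eta n = (norm (b n * b n) + norm (b n * a) * B0 * Mb) / d0" for n
  have "eta \<longlonglongrightarrow> (0 + 0 * B0 * Mb) / d0"
    unfolding eta_def by (intro tendsto_intros t1 t3) (use d0 in auto)
  then have "eta \<longlonglongrightarrow> 0" by simp
  then have "\<forall>\<^sub>F n in sequentially. norm (eta n) < 1 / (2 * (B0 + 1))"
    using tendstoD[of eta 0 sequentially "1 / (2 * (B0 + 1))"] B0(2) by (simp add: dist_norm)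
  then obtain n1 where n1: "\<forall>n\<ge>n1. norm (eta n) < 1 / (2 * (B0 + 1))"
    by (auto simp: eventually_sequentially)
  define B where "B = 2 * (B0 + B0 * Mb * B0)"
  have "\<forall>n\<ge>n1. \<forall>z\<in>G. z \<notin> spectrum (as n) \<and> norm (res (as n) z) \<le> B"
  proof (intro allI impI ballI)
    fix n z assume n: "n \<ge> n1" and z: "z \<in> G"
    have za: "z \<notin> spectrum a" using z G(2) by auto
    define R where "R = res a z"
    define y where "y = cc z - a"
    have yR: "y * R = 1" "R * y = 1" "a * R = R * a"
      using res_commute[OF za] by (auto simp: R_def y_def)
    have nR: "norm R \<le> B0" using B0 z by (simp add: R_def)
    have zne: "z \<noteq> 0" using G(3) z by auto
    have dz: "d0 \<le> cmod z" using d0 z by auto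
    have czR: "cc z * R = 1 + a * R" using yR(1) by (simp add: y_def algebra_simps)
    have "cc z * (b n * R * b n) = b n * (cc z * R) * b n"
      by (metis cc_commute mult.assoc)
    also have "\<dots> = b n * b n + b n * a * R * b n"
      by (simp add: czR algebra_simps)
    finally have e1: "cc z * (b n * R * b n) = b n * b n + b n * a * R * b n" .
    have "b n * R * b n = cc (1/z) * (cc z * (b n * R * b n))"
      using zne by (simp add: mult.assoc[symmetric] cc_mult[symmetric])
    then have "norm (b n * R * b n) = norm (b n * b n + b n * a * R * b n) / cmod z"
      by (simp add: e1 norm_divide norm_cc_mult)
    also have "\<dots> \<le> (norm (b n * b n) + norm (b n * a) * B0 * Mb) / cmod z"
    proof (intro divide_right_mono)
      have "norm (b n * a * R * b n) \<le> norm (b n * a) * norm R * norm (b n)"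
        by (metis norm_mult_ineq mult_right_mono norm_ge_zero order_trans)
      also have "\<dots> \<le> norm (b n * a) * B0 * Mb"
        by (intro mult_mono nR nb mult_nonneg_nonneg) (auto simp: B0)
      finally show "norm (b n * b n + b n * a * R * b n) \<le> norm (b n * b n) + norm (b n * a) * B0 * Mb"
        using norm_triangle_ineq[of "b n * b n" "b n * a * R * b n"] by linarith
    qed simp
    also have "\<dots> \<le> eta n" unfolding eta_def
      by (intro divide_left_mono dz d0 add_nonneg_nonneg mult_nonneg_nonneg) (use zne d0 in \<open>auto simp: B0 Mb0\<close>)
    finally have nbrb: "norm (b n * R * b n) \<le> eta n" .
    have eta_sm: "eta n * B0 \<le> 1/2"
    proof -
      have "eta n \<le> 1 / (2 * (B0 + 1))" using n1 n by fastforce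
      then have "eta n * B0 \<le> 1 / (2 * (B0 + 1)) * B0" by (intro mult_right_mono) (auto simp: B0)
      also have "\<dots> \<le> 1/2" using B0 by (simp add: field_simps)
      finally show ?thesis .
    qed
    define X where "X = R + R * b n * R"
    have x: "cc z - as n = y - b n" by (simp add: y_def b_def)
    have yRbR: "y * (R * (b n * R)) = b n * R" by (metis yR(1) mult.assoc mult_1_left)
    have RbRy: "(R * b n * R) * y = R * b n" by (metis yR(2) mult.assoc mult_1_right)
    have r: "(cc z - as n) * X = 1 - (b n * R * b n) * R"
      unfolding x X_def by (simp add: algebra_simps yR yRbR mult.assoc)
    have l: "X * (cc z - as n) = 1 - R * (b n * R * b n)"
      unfolding x X_def by (simp add: algebra_simps yR RbRy mult.assoc)
    have ne1: "norm ((b n * R * b n) * R) \<le> 1/2"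
    proof -
      have "norm ((b n * R * b n) * R) \<le> eta n * B0"
        using norm_mult_ineq[of "b n * R * b n" R] mult_mono[OF nbrb nR] nbrb
          norm_ge_zero[of "b n * R * b n"] norm_ge_zero[of R] by linarith
      then show ?thesis using eta_sm by linarith
    qed
    have ne2: "norm (R * (b n * R * b n)) \<le> 1/2"
    proof -
      have "norm (R * (b n * R * b n)) \<le> B0 * eta n"
        using norm_mult_ineq[of R "b n * R * b n"] mult_mono[OF nR nbrb] B0 by force
      then show ?thesis using eta_sm by (simp add: mult.commute)
    qed
    note ai = almost_inv[OF r l ne1 ne2]
    have nX: "norm X \<le> B0 + B0 * Mb * B0"
    proof -
      have "norm (R * b n * R) \<le> norm R * norm (b n) * norm R"
        by (metis norm_mult_ineq mult_right_mono norm_ge_zero order_trans)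
      also have "\<dots> \<le> B0 * Mb * B0" by (intro mult_mono nR nb) (auto simp: B0 Mb0)
      finally have h: "norm (R * b n * R) \<le> B0 * Mb * B0" .
      have "norm X \<le> norm R + norm (R * b n * R)" unfolding X_def by (rule norm_triangle_ineq)
      then show ?thesis using h nR by linarith
    qed
    have "z \<notin> spectrum (as n)" using ai(1) by (simp add: spec_iff)
    moreover have "norm (res (as n) z) \<le> B" using ai(2) nX by (simp add: res_def B_def)
    ultimately show "z \<notin> spectrum (as n) \<and> norm (res (as n) z) \<le> B" by blast
  qed
  then show ?thesis by blast
qed



lemma inv_series:
  fixes y :: "'a::{complex_normed_algebra_1,banach}"
  assumes y: "ba_invertible y" and sm: "cmod w * norm (ba_inv y) < 1"
  shows "ba_invertible (y + cc w)"
        "(\<lambda>k. cc ((- w) ^ k) * ba_inv y ^ Suc k) sums ba_inv (y + cc w)"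
proof -
  define N where "N = ba_inv y"
  have yN: "y * N = 1" "N * y = 1" using ba_inv[OF y] by (auto simp: N_def)
  define x where "x = cc (- w) * N"
  have nx: "norm x < 1" using sm by (simp add: x_def norm_cc_mult N_def)
  define S where "S = ba_inv (1 - x)"
  have S: "S * (1 - x) = 1" "(1 - x) * S = 1" using ba_inv[OF neumann(2)[OF nx]] by (auto simp: S_def)
  have yx: "y * (1 - x) = y + cc w"
  proof -
    have "y * x = cc (- w) * (y * N)" unfolding x_def by (metis cc_commute mult.assoc)
    then show ?thesis by (simp add: algebra_simps yN cc_minus)
  qed
  have r: "(y + cc w) * (S * N) = 1"
    by (metis yx S(2) yN(1) mult.assoc mult_1_left)
  have l: "(S * N) * (y + cc w) = 1"
    by (metis yx S(1) yN(2) mult.assoc mult_1_left)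
  have inv: "ba_invertible (y + cc w)" "ba_inv (y + cc w) = S * N" using ba_inv_unique[OF r l] by auto
  then show "ba_invertible (y + cc w)" by simp
  have "(\<lambda>k. x ^ k * N) sums (S * N)"
    using neumann(1)[OF nx] by (intro sums_mult2) (simp add: S_def)
  moreover have "x ^ k * N = cc ((- w) ^ k) * N ^ Suc k" for k
    unfolding x_def cc_mult_power by (simp add: mult.assoc power_commutes)
  ultimately show "(\<lambda>k. cc ((- w) ^ k) * ba_inv y ^ Suc k) sums ba_inv (y + cc w)"
    using inv N_def by simp
qed

lemma roots_sum:
  assumes m: "0 < m"
  defines "\<omega> \<equiv> cis (2 * pi / real m)"
  shows "(\<Sum>j<m. (\<omega> ^ j) ^ k) = (if k = 0 then of_nat m else if k < m then 0 else (\<Sum>j<m. (\<omega> ^ j) ^ k))"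
proof -
  have "(\<Sum>j<m. (\<omega> ^ j) ^ k) = 0" if k: "0 < k" "k < m"
  proof -
    have pk: "\<omega> ^ k = cis (2 * pi * real k / real m)"
      unfolding \<omega>_def Complex.DeMoivre by (simp add: field_simps)
    have "cis (2 * pi * real k / real m) \<noteq> cis (2 * pi * real 0 / real m)"
      using inj_on_contraD[OF bij_betw_imp_inj_on[OF Complex.bij_betw_roots_unity[OF m]], of k 0] k by auto
    then have ne: "\<omega> ^ k \<noteq> 1" using pk by simp
    have "(\<omega> ^ k) ^ m = (\<omega> ^ m) ^ k" by (simp add: power_mult[symmetric] mult.commute)
    also have "\<omega> ^ m = 1" unfolding \<omega>_def Complex.DeMoivre using m by (simp add: complex_eq_iff)
    finally have one: "(\<omega> ^ k) ^ m = 1" by simp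
    have "(\<Sum>j<m. (\<omega> ^ j) ^ k) = (\<Sum>j<m. (\<omega> ^ k) ^ j)"
      by (simp add: power_mult[symmetric] mult.commute)
    also have "\<dots> = 0" using ne one by (simp add: sum_gp_strict)
    finally show ?thesis .
  qed
  then show ?thesis by auto
qed

lemma norm_omega: "cmod (cis t ^ j) = 1"
  by (simp add: norm_power)

lemma mean_value:
  fixes y :: "'a::{complex_normed_algebra_1,banach}"
  assumes y: "ba_invertible y" and rho: "0 < \<rho>" "\<rho> * norm (ba_inv y) \<le> 1/4" and m: "0 < m"
  shows "norm (ba_inv y) \<le> (\<Sum>j<m. norm (ba_inv (y + cc (\<rho> * cis (2 * pi / real m) ^ j)))) / real m
           + 2 * norm (ba_inv y) / 4 ^ m"
proof -
  define \<omega> where "\<omega> = cis (2 * pi / real m)"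
  define N where "N = ba_inv y"
  define r where "r = norm N"
  define t where "t = \<rho> * r"
  have r0: "r \<ge> 0" by (simp add: r_def)
  have t0: "t \<ge> 0" "t \<le> 1/4" using rho r0 by (auto simp: t_def r_def N_def)
  define sk where "sk k = (\<Sum>j<m. (\<omega> ^ j) ^ k)" for k
  define c where "c k = cc ((- complex_of_real \<rho>) ^ k * sk k) * N ^ Suc k" for k
  define T where "T = (\<Sum>j<m. ba_inv (y + cc (\<rho> * \<omega> ^ j)))"
  have wsm: "cmod (complex_of_real \<rho> * \<omega> ^ j) * norm (ba_inv y) < 1" for j
    using rho by (simp add: \<omega>_def norm_mult norm_power)
  have "(\<lambda>k. \<Sum>j<m. cc ((- (complex_of_real \<rho> * \<omega> ^ j)) ^ k) * N ^ Suc k) sums T"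
    unfolding T_def N_def by (intro sums_sum inv_series(2)[OF y wsm])
  moreover have "(\<Sum>j<m. cc ((- (complex_of_real \<rho> * \<omega> ^ j)) ^ k) * N ^ Suc k) = c k" for k
  proof -
    have "(\<Sum>j<m. cc ((- (complex_of_real \<rho> * \<omega> ^ j)) ^ k) * N ^ Suc k)
        = cc (\<Sum>j<m. (- (complex_of_real \<rho> * \<omega> ^ j)) ^ k) * N ^ Suc k"
      by (simp add: cc_sum sum_distrib_right)
    also have "(\<Sum>j<m. (- (complex_of_real \<rho> * \<omega> ^ j)) ^ k) = (- complex_of_real \<rho>) ^ k * sk k"
      unfolding sk_def sum_distrib_left
      by (intro sum.cong refl) (metis minus_mult_left power_mult_distrib)
    finally show ?thesis by (simp add: c_def)
  qed
  ultimately have cT: "c sums T" by simp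
  have sk0: "sk 0 = of_nat m" by (simp add: sk_def)
  have skmid: "sk k = 0" if "0 < k" "k < m" for k
    using roots_sum[OF m, of k] that by (simp add: sk_def \<omega>_def)
  have skb: "cmod (sk k) \<le> real m" for k
  proof -
    have "cmod (sk k) \<le> (\<Sum>j<m. cmod ((\<omega> ^ j) ^ k))" unfolding sk_def by (rule norm_sum)
    also have "\<dots> = real m" by (simp add: \<omega>_def norm_power)
    finally show ?thesis .
  qed
  define d :: "nat \<Rightarrow> 'a" where "d k = (if k = 0 then c 0 else 0)" for k
  have "d = (\<lambda>r. if r = 0 then c r else 0)" by (auto simp: d_def fun_eq_iff)
  then have dS: "d sums c 0" using sums_single[of 0 c] by simp
  have cd: "(\<lambda>k. c k - d k) sums (T - c 0)" by (rule sums_diff[OF cT dS])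
  define h where "h k = (if m \<le> k then real m * r * t ^ k else 0)" for k
  have hb: "norm (c k - d k) \<le> h k" for k
  proof (cases "k = 0")
    case True then show ?thesis using m by (simp add: d_def h_def)
  next
    case False
    show ?thesis
    proof (cases "k < m")
      case True then show ?thesis using False skmid[of k] by (simp add: c_def d_def h_def)
    next
      case km: False
      have "norm (c k) = \<rho> ^ k * cmod (sk k) * norm (N ^ Suc k)"
        using rho by (simp add: c_def norm_cc_mult norm_mult norm_power)
      also have "\<dots> \<le> \<rho> ^ k * real m * r ^ Suc k"
      proof -
        have np: "norm (N ^ Suc k) \<le> r ^ Suc k" unfolding r_def by (rule norm_power_ineq)
        have "\<rho> ^ k * cmod (sk k) \<le> \<rho> ^ k * real m" using skb[of k] rho by (intro mult_left_mono) auto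
        then show ?thesis using np by (intro mult_mono) (use rho in auto)
      qed
      also have "\<dots> = real m * r * t ^ k" by (simp add: t_def power_mult_distrib)
      finally show ?thesis using False km by (simp add: d_def h_def)
    qed
  qed
  have hs: "h sums (real m * r * t ^ m / (1 - t))"
  proof -
    have "(\<lambda>i. (real m * r * t ^ m) * t ^ i) sums ((real m * r * t ^ m) * (1 / (1 - t)))"
      by (intro sums_mult geometric_sums) (use t0 in auto)
    moreover have "(\<lambda>i. h (i + m)) = (\<lambda>i. (real m * r * t ^ m) * t ^ i)"
      by (auto simp: h_def power_add)
    ultimately have "(\<lambda>i. h (i + m)) sums (real m * r * t ^ m / (1 - t))" by simp
    then have "h sums (real m * r * t ^ m / (1 - t) + (\<Sum>i<m. h i))" by (simp add: sums_iff_shift)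
    moreover have "(\<Sum>i<m. h i) = 0" by (simp add: h_def)
    ultimately show ?thesis by simp
  qed
  have "norm (T - c 0) \<le> real m * r * t ^ m / (1 - t)"
  proof -
    have "norm (T - c 0) = norm (suminf (\<lambda>k. c k - d k))" using cd sums_unique by metis
    also have "\<dots> \<le> suminf h" by (rule norm_suminf_le[OF hb sums_summable[OF hs]])
    also have "\<dots> = real m * r * t ^ m / (1 - t)" using hs sums_unique by metis
    finally show ?thesis .
  qed
  also have "\<dots> = real m * r * (t ^ m / (1 - t))" by simp
  also have "\<dots> \<le> real m * r * (2 / 4 ^ m)"
  proof (intro mult_left_mono)
    have "t ^ m \<le> (1/4) ^ m" by (intro power_mono t0)
    then have "t ^ m / (1 - t) \<le> (1/4)^m / (3/4)"
      by (intro frac_le) (use t0 in auto)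
    also have "\<dots> \<le> 2 / 4 ^ m" by (simp add: power_divide field_simps)
    finally show "t ^ m / (1 - t) \<le> 2 / 4 ^ m" .
  qed (use r0 in auto)
  finally have e: "norm (T - c 0) \<le> real m * r * (2 / 4 ^ m)" .
  have nc0: "norm (c 0) = real m * r" by (simp add: c_def sk0 norm_cc_mult r_def)
  have nT: "norm T \<le> (\<Sum>j<m. norm (ba_inv (y + cc (\<rho> * \<omega> ^ j))))"
    unfolding T_def by (rule norm_sum)
  have "real m * r \<le> norm T + norm (T - c 0)"
    using nc0 norm_triangle_ineq2[of "c 0" T] norm_minus_commute[of T "c 0"] by linarith
  then have "real m * r \<le> (\<Sum>j<m. norm (ba_inv (y + cc (\<rho> * \<omega> ^ j)))) + real m * (2 * r / 4 ^ m)"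
  proof -
    have "real m * r * (2 / 4 ^ m) = real m * (2 * r / 4 ^ m)" by simp
    then show ?thesis using nT e \<open>real m * r \<le> norm T + norm (T - c 0)\<close> by linarith
  qed
  then have "r \<le> (\<Sum>j<m. norm (ba_inv (y + cc (\<rho> * \<omega> ^ j)))) / real m + 2 * r / 4 ^ m"
    using m by (simp add: field_simps)
  then show ?thesis by (simp add: r_def N_def \<omega>_def)
qed



lemma four_pow: "real m * real m \<le> 4 ^ m"
proof -
  have "m < 2 ^ m" by (rule less_exp)
  then have "real m \<le> 2 ^ m" by (metis less_imp_le of_nat_le_iff of_nat_numeral of_nat_power)
  then have "real m * real m \<le> 2 ^ m * 2 ^ m" by (intro mult_mono) auto
  also have "\<dots> = 4 ^ m" by (simp add: power_mult_distrib[symmetric])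
  finally show ?thesis .
qed

lemma max_principle:
  fixes b :: "'a::{complex_normed_algebra_1,banach}"
  assumes W: "bounded W" "open W" and inv: "\<forall>z\<in>closure W. z \<notin> spectrum b"
    and bd: "\<forall>z\<in>frontier W. norm (res b z) \<le> B"
  shows "\<forall>z\<in>closure W. norm (res b z) \<le> B"
proof (rule ccontr)
  assume "\<not> ?thesis"
  then obtain za where za: "za \<in> closure W" "norm (res b za) > B" by force
  define f where "f z = norm (res b z)" for z
  define K where "K = closure W"
  have K: "compact K" "K \<noteq> {}" using W za by (auto simp: K_def compact_closure)
  have fc: "continuous_on K f"
    unfolding f_def using continuous_on_subset[OF res_cont[of b]] inv
    by (intro continuous_on_norm) (auto simp: K_def)
  obtain z0 where z0: "z0 \<in> K" "\<forall>z\<in>K. f z \<le> f z0" using continuous_attains_sup[OF K fc] by blast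
  define M where "M = f z0"
  have MB: "M > B" using z0 za by (auto simp: M_def f_def K_def intro: less_le_trans)
  define S where "S = {z \<in> K. f z = M}"
  have Scl: "closed S" unfolding S_def
    by (rule continuous_closed_preimage_constant[OF fc]) (simp add: K_def)
  have Sc: "compact S" using compact_Int_closed[OF K(1) Scl] by (simp add: S_def Int_absorb1)
  have Sne: "S \<noteq> {}" using z0 by (auto simp: S_def M_def)
  have "continuous_on S Re" by (intro continuous_intros)
  then obtain z1 where z1: "z1 \<in> S" "\<forall>z\<in>S. Re z \<le> Re z1" using continuous_attains_sup[OF Sc Sne] by blast
  have z1K: "z1 \<in> K" and fz1: "f z1 = M" using z1 by (auto simp: S_def)
  have "z1 \<notin> frontier W" using bd fz1 MB by (auto simp: f_def)
  then have "z1 \<in> W" using z1K W(2) by (auto simp: K_def frontier_def interior_open)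
  then obtain e where e: "e > 0" "ball z1 e \<subseteq> W" using W(2) open_contains_ball by blast
  have M0: "M \<ge> 0" by (simp add: M_def f_def)
  define \<rho> where "\<rho> = min (e / 2) (1 / (4 * (M + 1)))"
  have rho: "\<rho> > 0" "\<rho> < e" using e M0 by (auto simp: \<rho>_def)
  have rhoM: "\<rho> * M \<le> 1/4"
  proof -
    have "\<rho> * M \<le> (1 / (4 * (M + 1))) * (M + 1)" by (intro mult_mono) (use M0 rho in \<open>auto simp: \<rho>_def\<close>)
    also have "\<dots> = 1/4" using M0 by (simp add: field_simps)
    finally show ?thesis .
  qed
  have inK: "z1 + complex_of_real \<rho> * cis t ^ j \<in> K" for t j
  proof -
    have "dist z1 (z1 + complex_of_real \<rho> * cis t ^ j) < e"
      using rho by (simp add: dist_norm norm_mult norm_power)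
    then show ?thesis using e closure_subset[of W] by (auto simp: K_def)
  qed
  have p0K: "z1 + complex_of_real \<rho> \<in> K" using inK[of 0 0] by simp
  have "z1 + complex_of_real \<rho> \<notin> S" using z1(2) rho by force
  then have "f (z1 + complex_of_real \<rho>) \<noteq> M" using p0K by (auto simp: S_def)
  moreover have "f (z1 + complex_of_real \<rho>) \<le> M" using z0 p0K by (auto simp: M_def)
  ultimately have M'M: "f (z1 + complex_of_real \<rho>) < M" by simp
  define M' where "M' = f (z1 + complex_of_real \<rho>)"
  obtain m' :: nat where m': "real m' > 2 * M / (M - M')" using reals_Archimedean2 by blast
  define m where "m = Suc m'"
  have m0: "0 < m" by (simp add: m_def)
  define \<omega> where "\<omega> = cis (2 * pi / real m)"
  define y where "y = cc z1 - b"
  have yi: "ba_invertible y" using inv z1K by (simp add: spec_iff y_def K_def)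
  have ny: "norm (ba_inv y) = M" using fz1 by (simp add: f_def res_def y_def)
  have yw: "y + cc (complex_of_real \<rho> * \<omega> ^ j) = cc (z1 + complex_of_real \<rho> * \<omega> ^ j) - b" for j
    by (simp add: y_def cc_add)
  have mv: "M \<le> (\<Sum>j<m. f (z1 + complex_of_real \<rho> * \<omega> ^ j)) / real m + 2 * M / 4 ^ m"
    using mean_value[OF yi rho(1) _ m0] rhoM ny yw
    by (simp add: f_def res_def \<omega>_def)
  have "(\<Sum>j<m. f (z1 + complex_of_real \<rho> * \<omega> ^ j))
        = f (z1 + complex_of_real \<rho>) + (\<Sum>j<m'. f (z1 + complex_of_real \<rho> * \<omega> ^ Suc j))"
    unfolding m_def sum.lessThan_Suc_shift by simp
  also have "(\<Sum>j<m'. f (z1 + complex_of_real \<rho> * \<omega> ^ Suc j)) \<le> real m' * M"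
  proof -
    have b: "f (z1 + complex_of_real \<rho> * \<omega> ^ j) \<le> M" for j
      using z0 inK[of "2*pi/real m" j] by (auto simp: M_def \<omega>_def)
    have "(\<Sum>j<m'. f (z1 + complex_of_real \<rho> * \<omega> ^ Suc j)) \<le> (\<Sum>j<m'. M)"
      by (intro sum_mono b)
    then show ?thesis by simp
  qed
  finally have sb: "(\<Sum>j<m. f (z1 + complex_of_real \<rho> * \<omega> ^ j)) \<le> M' + real m' * M"
    by (simp add: M'_def)
  have "M * real m \<le> M' + real m' * M + 2 * M * real m / 4 ^ m"
  proof -
    have "M * real m \<le> ((\<Sum>j<m. f (z1 + complex_of_real \<rho> * \<omega> ^ j)) / real m + 2 * M / 4 ^ m) * real m"
      using mv m0 by (intro mult_right_mono) auto
    also have "\<dots> = (\<Sum>j<m. f (z1 + complex_of_real \<rho> * \<omega> ^ j)) + 2 * M * real m / 4 ^ m"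
      using m0 by (simp add: field_simps)
    finally show ?thesis using sb by linarith
  qed
  then have "M - M' \<le> 2 * M * real m / 4 ^ m" by (simp add: m_def algebra_simps)
  also have "\<dots> \<le> 2 * M * real m / (real m * real m)"
    using four_pow[of m] m0 M0 by (intro divide_left_mono mult_nonneg_nonneg) auto
  also have "\<dots> = 2 * M / real m" using m0 by simp
  finally have A: "M - M' \<le> 2 * M / real m" .
  have "M' < M" using M'M by (simp add: M'_def)
  then have "2 * M / (M - M') < real m" using m' by (simp add: m_def)
  then have "2 * M < real m * (M - M')" using \<open>M' < M\<close> by (simp add: divide_less_eq)
  then have "2 * M / real m < M - M'" using m0 by (simp add: divide_less_eq mult.commute)
  then show False using A by simp
qed



lemma components_bridge:
  assumes "C \<in> components S"
  shows "C \<in> connected_components_of (top_of_set S)"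
proof -
  obtain x where x: "x \<in> S" "C = connected_component_set S x" using assms by (auto simp: components_iff)
  have "connected_component_of_set (top_of_set S) x = connected_component_set S x"
    by (auto simp: connected_component_of_def connected_component_def connectedin_subtopology)
  then show ?thesis using x by (auto simp: connected_components_of_def)
qed

lemma clopen_part:
  fixes S :: "complex set"
  assumes S: "compact S" and C: "C \<in> components S" and U: "open U" "C \<subseteq> U"
  obtains K where "C \<subseteq> K" "K \<subseteq> U" "K \<subseteq> S" "closed K" "closed (S - K)"
proof -
  let ?X = "top_of_set S"
  have Ccl: "closed C" using closed_components[OF compact_imp_closed[OF S] C] .
  have CS: "C \<subseteq> S" using in_components_subset[OF C] .
  have Ccp: "compact C" using compact_Int_closed[OF S Ccl] CS by (simp add: Int_absorb1)
  have lc: "locally_compact_space ?X"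
    by (intro compact_imp_locally_compact_space compact_space_subtopology) (simp add: S)
  have hs: "Hausdorff_space ?X" by (simp add: Hausdorff_space_subtopology)
  have cc: "C \<in> connected_components_of ?X" by (rule components_bridge[OF C])
  have ci: "compactin ?X C" using Ccp CS by (simp add: compactin_subtopology)
  have oi: "openin ?X (S \<inter> U)" using U(1) by (auto simp: openin_open)
  obtain U' V' where UV: "openin ?X U'" "openin ?X V'" "disjnt U' V'" "U' \<union> V' = S" "C \<subseteq> U'" "U' \<subseteq> S \<inter> U"
    using wilder_locally_compact_component_thm[OF lc hs cc ci oi] CS U(2) by auto
  have U'eq: "U' = S - V'" using UV(3,4) by (auto simp: disjnt_def)
  have V'eq: "V' = S - U'" using UV(3,4) by (auto simp: disjnt_def)
  have Scl: "closed S" using S by (rule compact_imp_closed)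
  obtain O1 where O1: "open O1" "V' = S \<inter> O1" using UV(2) by (auto simp: openin_open)
  obtain O2 where O2: "open O2" "U' = S \<inter> O2" using UV(1) by (auto simp: openin_open)
  have cU: "closed U'" unfolding U'eq O1(2) using Scl O1(1)
    by (metis Diff_Int_distrib Diff_eq closed_Int Int_Diff Int_absorb open_closed)
  have cV: "closed V'" unfolding V'eq O2(2) using Scl O2(1)
    by (metis Diff_Int_distrib Diff_eq closed_Int Int_Diff Int_absorb open_closed)
  have "C \<subseteq> U'" "U' \<subseteq> U" "U' \<subseteq> S" "closed (S - U')" using UV(5,6) cV V'eq by auto
  then show ?thesis using that[of U'] cU by blast
qed

lemma sep_dist:
  fixes A B :: "complex set"
  assumes "compact A" "closed B" "A \<inter> B = {}" "B \<noteq> {}"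
  obtains d where "d > 0" "\<forall>a\<in>A. d \<le> infdist a B"
proof (cases "A = {}")
  case True then show ?thesis using that[of 1] by auto
next
  case False
  have "continuous_on A (\<lambda>a. infdist a B)" by (intro continuous_intros)
  then obtain a0 where a0: "a0 \<in> A" "\<forall>a\<in>A. infdist a0 B \<le> infdist a B"
    using continuous_attains_inf[OF assms(1) False] by blast
  have "infdist a0 B \<noteq> 0" using in_closed_iff_infdist_zero[OF assms(2,4)] a0(1) assms(3) by auto
  then have "infdist a0 B > 0" using infdist_nonneg[of a0 B] by linarith
  then show ?thesis using that a0 by blast
qed



lemma contra_step:
  fixes a an :: "'a::{complex_normed_algebra_1,banach}"
  assumes l0: "l0 \<in> spectrum a" and t: "t > 0" and mu: "l0 + complex_of_real t \<notin> spectrum a"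
    and inv: "l0 \<notin> spectrum an" and Rb: "norm (res an l0) \<le> B"
  shows "cmod l0 < 3 * t * (1 + B * norm a) + B * norm ((an - a) * a)"
proof -
  have B0: "B \<ge> 0" using Rb norm_ge_zero order_trans by blast
  define Rn where "Rn = res an l0"
  define u where "u = res a (l0 + complex_of_real t)"
  have Rn: "Rn * (cc l0 - an) = 1" using res_commute(3)[OF inv] by (simp add: Rn_def)
  have uu: "(cc (l0 + complex_of_real t) - a) * u = 1" using res_commute(2)[OF mu] by (simp add: u_def)
  have lo: "1/2 < norm u * cmod (l0 - (l0 + complex_of_real t))" using res_lower[OF l0 mu] by (simp add: u_def)
  have e: "cmod (l0 - (l0 + complex_of_real t)) = t" using t by simp
  have "1/2 < norm u * t" using lo unfolding e .
  then have lo': "1 < 2 * t * norm u" by (simp add: field_simps)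
  define v where "v = (cc l0 - a) * u"
  have v: "v = 1 - cc (complex_of_real t) * u" using uu by (simp add: v_def cc_add algebra_simps)
  have nv: "norm v \<le> 1 + t * norm u"
    using norm_triangle_ineq4[of 1 "cc (complex_of_real t) * u"] t by (simp add: v norm_cc_mult)
  have aeq: "a = Rn * (cc l0 - a) * a + Rn * (a - an) * a"
  proof -
    have "a = Rn * (cc l0 - an) * a" using Rn by simp
    also have "cc l0 - an = (cc l0 - a) + (a - an)" by simp
    finally show ?thesis by (simp add: algebra_simps)
  qed
  have ca: "(cc l0 - a) * a = a * (cc l0 - a)" by (simp add: algebra_simps cc_commute)
  have au: "a * u = Rn * a * v + Rn * (a - an) * a * u"
  proof -
    have "a * u = (Rn * (cc l0 - a) * a + Rn * (a - an) * a) * u" using aeq by simp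
    also have "\<dots> = Rn * ((cc l0 - a) * a) * u + Rn * (a - an) * a * u" by (simp add: algebra_simps)
    also have "\<dots> = Rn * a * v + Rn * (a - an) * a * u" by (simp add: ca v_def mult.assoc)
    finally show ?thesis .
  qed
  have lu: "cc l0 * u = a * u + v" by (simp add: v_def algebra_simps)
  have "cmod l0 * norm u = norm (cc l0 * u)" by (rule norm_cc_mult[symmetric])
  also have "\<dots> = norm (a * u + v)" by (simp only: lu)
  also have "\<dots> \<le> norm (Rn * a * v) + norm (Rn * (a - an) * a * u) + norm v"
    using au norm_triangle_ineq[of "a * u" v] norm_triangle_ineq[of "Rn * a * v" "Rn * (a - an) * a * u"]
    by simp
  also have "\<dots> \<le> B * norm a * norm v + B * norm ((an - a) * a) * norm u + norm v"
  proof -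
    have 1: "norm (Rn * a * v) \<le> B * norm a * norm v"
    proof -
      have "norm (Rn * a * v) \<le> norm (Rn * a) * norm v" by (rule norm_mult_ineq)
      also have "\<dots> \<le> norm Rn * norm a * norm v"
        by (intro mult_right_mono norm_mult_ineq) simp
      also have "\<dots> \<le> B * norm a * norm v" using Rb by (intro mult_right_mono) (auto simp: Rn_def)
      finally show ?thesis .
    qed
    have 2: "norm (Rn * (a - an) * a * u) \<le> B * norm ((an - a) * a) * norm u"
    proof -
      have "norm (Rn * (a - an) * a * u) = norm (Rn * ((a - an) * a) * u)" by (simp only: mult.assoc)
      also have "\<dots> \<le> norm (Rn * ((a - an) * a)) * norm u" by (rule norm_mult_ineq)
      also have "\<dots> \<le> norm Rn * norm ((a - an) * a) * norm u"
        by (intro mult_right_mono norm_mult_ineq) simp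
      also have "norm ((a - an) * a) = norm ((an - a) * a)"
        by (metis minus_diff_eq minus_mult_left norm_minus_cancel)
      also have "norm Rn * norm ((an - a) * a) * norm u \<le> B * norm ((an - a) * a) * norm u"
        using Rb by (intro mult_right_mono) (auto simp: Rn_def)
      finally show ?thesis .
    qed
    show ?thesis using 1 2 by linarith
  qed
  also have "\<dots> = (1 + B * norm a) * norm v + B * norm ((an - a) * a) * norm u" by (simp add: algebra_simps)
  also have "\<dots> \<le> (1 + B * norm a) * (1 + t * norm u) + B * norm ((an - a) * a) * norm u"
    using nv B0 by (intro add_right_mono mult_left_mono) auto
  also have "\<dots> < (1 + B * norm a) * (3 * t * norm u) + B * norm ((an - a) * a) * norm u"
  proof -
    have "1 + t * norm u < 3 * t * norm u" using lo' by linarith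
    moreover have "1 + B * norm a > 0" using B0 by (simp add: add_pos_nonneg)
    ultimately show ?thesis by simp
  qed
  also have "\<dots> = (3 * t * (1 + B * norm a) + B * norm ((an - a) * a)) * norm u" by (simp add: algebra_simps)
  finally have "cmod l0 * norm u < (3 * t * (1 + B * norm a) + B * norm ((an - a) * a)) * norm u" .
  then show ?thesis using norm_ge_zero[of u] by (simp add: mult_less_cancel_right)
qed



theorem lemma2p1:
  fixes a :: "'a::{complex_normed_algebra_1, banach}"
    and as :: "nat \<Rightarrow> 'a"
    and U :: "complex set"
  assumes "nu_conv as a"
    and "open U" and "0 \<notin> U"
    and "\<exists>C\<in>components (spectrum a). C \<subseteq> U"
  shows "\<exists>n0. \<forall>n\<ge>n0. \<exists>C\<in>components (spectrum (as n)). C \<subseteq> U"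
proof -
  note nu = assms(1)
  obtain C where C: "C \<in> components (spectrum a)" "C \<subseteq> U" using assms(4) by blast
  define Sp where "Sp = spectrum a"
  have Spc: "compact Sp" unfolding Sp_def by (rule spec_compact)
  obtain K where K: "C \<subseteq> K" "K \<subseteq> U" "K \<subseteq> Sp" "closed K" "closed (Sp - K)"
    using clopen_part[OF Spc C(1)[folded Sp_def] assms(2) C(2)] by blast
  define F where "F = Sp - K"
  have Cne: "C \<noteq> {}" using C(1) in_components_nonempty by blast
  have Kne: "K \<noteq> {}" using Cne K(1) by blast
  have Kc: "compact K" using compact_Int_closed[OF Spc K(4)] K(3) by (simp add: Int_absorb1)
  have Fc: "compact F" using compact_Int_closed[OF Spc K(5)] by (simp add: F_def Int_absorb1)
  have "continuous_on K Re" by (intro continuous_intros)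
  then obtain l0 where l0: "l0 \<in> K" "\<forall>z\<in>K. Re z \<le> Re l0"
    using continuous_attains_sup[OF Kc Kne] by blast
  have l0ne: "l0 \<noteq> 0" using l0(1) K(2) assms(3) by blast
  obtain d1 where d1: "d1 > 0" "\<forall>k\<in>K. d1 \<le> infdist k (- U)"
    using sep_dist[OF Kc, of "- U"] K(2) assms(2,3) by (auto simp: open_closed)
  obtain d2 where d2: "d2 > 0" "\<forall>z\<in>F. d2 \<le> infdist z K"
  proof (cases "F = {}")
    case True then show ?thesis using that[of 1] by auto
  next
    case False
    have "F \<inter> K = {}" by (auto simp: F_def)
    then show ?thesis using sep_dist[OF Fc K(4) _ Kne] that by blast
  qed
  define \<delta> where "\<delta> = min d1 d2 / 2"
  have dl: "\<delta> > 0" "\<delta> < d1" "\<delta> < d2" using d1 d2 by (auto simp: \<delta>_def)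
  define W where "W = {z. infdist z K < \<delta>}"
  have ci: "continuous_on UNIV (\<lambda>z. infdist z K)" by (intro continuous_intros)
  have Wo: "open W" unfolding W_def by (rule open_Collect_less[OF ci continuous_on_const])
  have cW: "closure W \<subseteq> {z. infdist z K \<le> \<delta>}"
    by (rule closure_minimal) (auto simp: W_def intro: closed_Collect_le[OF ci continuous_on_const])
  have cWU: "closure W \<subseteq> U"
  proof
    fix z assume "z \<in> closure W"
    then have zd: "infdist z K \<le> \<delta>" using cW by auto
    obtain k where k: "k \<in> K" "infdist z K = dist z k" using infdist_attains_inf[OF K(4) Kne] by blast
    show "z \<in> U"
    proof (rule ccontr)
      assume "z \<notin> U"
      then have "infdist k (- U) \<le> dist k z" by (intro infdist_le) auto
      then show False using d1(2) k zd dl by (auto simp: dist_commute)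
    qed
  qed
  have KW: "K \<subseteq> W" using dl by (auto simp: W_def)
  have Wb: "bounded (closure W)"
  proof -
    obtain R where R: "\<forall>x\<in>K. norm x \<le> R" using compact_imp_bounded[OF Kc] by (auto simp: bounded_iff)
    have "norm z \<le> R + \<delta>" if "z \<in> closure W" for z
    proof -
      have zd: "infdist z K \<le> \<delta>" using cW that by auto
      obtain k where k: "k \<in> K" "infdist z K = dist z k" using infdist_attains_inf[OF K(4) Kne] by blast
      have "norm z \<le> norm k + dist z k" by (metis dist_norm norm_triangle_sub add.commute)
      then show ?thesis using R k zd by fastforce
    qed
    then show ?thesis by (auto simp: bounded_iff)
  qed
  have fsc: "frontier W \<subseteq> closure W" by (auto simp: frontier_def)
  have Gc: "compact (frontier W)"
    using bounded_subset[OF Wb fsc] frontier_closed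
    by (simp add: compact_eq_bounded_closed)
  have GS: "frontier W \<inter> spectrum a = {}"
  proof (rule ccontr)
    assume "frontier W \<inter> spectrum a \<noteq> {}"
    then obtain z where z: "z \<in> frontier W" "z \<in> Sp" by (auto simp: Sp_def)
    have zc: "z \<in> closure W" "z \<notin> W" using z(1) Wo by (auto simp: frontier_def interior_open)
    show False
    proof (cases "z \<in> K")
      case True then show False using zc KW by auto
    next
      case False
      then have "z \<in> F" using z by (auto simp: F_def)
      then show False using d2 cW zc dl by force
    qed
  qed
  have G0: "0 \<notin> frontier W" using cWU fsc assms(3) by blast
  obtain n1 B1 where n1: "\<forall>n\<ge>n1. \<forall>z\<in>frontier W. z \<notin> spectrum (as n) \<and> norm (res (as n) z) \<le> B1"
    using upper_uniform[OF nu Gc GS G0] by blast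
  define B where "B = max B1 0"
  have B0: "B \<ge> 0" by (simp add: B_def)
  define t where "t = min (d2 / 2) (cmod l0 / (12 * (1 + B * norm a)))"
  have pa: "1 + B * norm a > 0" using B0 by (simp add: add_pos_nonneg)
  have t0: "t > 0" using d2 l0ne pa by (auto simp: t_def)
  have td2: "t < d2" using d2 by (auto simp: t_def)
  have t3: "3 * t * (1 + B * norm a) \<le> cmod l0 / 4"
  proof -
    have "t \<le> cmod l0 / (12 * (1 + B * norm a))" by (simp add: t_def)
    then have "t * (12 * (1 + B * norm a)) \<le> cmod l0" using pa by (simp add: field_simps)
    moreover have "3 * t * (1 + B * norm a) = t * (12 * (1 + B * norm a)) / 4" by simp
    ultimately show ?thesis by linarith
  qed
  have mu: "l0 + complex_of_real t \<notin> spectrum a"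
  proof
    assume m: "l0 + complex_of_real t \<in> spectrum a"
    have "l0 + complex_of_real t \<notin> K" using l0(2) t0 by force
    then have "l0 + complex_of_real t \<in> F" using m by (simp add: F_def Sp_def)
    moreover have "infdist (l0 + complex_of_real t) K \<le> t"
      using infdist_le[OF l0(1), of "l0 + complex_of_real t"] t0 by (simp add: dist_norm)
    ultimately show False using d2 td2 by force
  qed
  have l0S: "l0 \<in> spectrum a" using l0(1) K(3) by (simp add: Sp_def subsetD)
  have "(\<lambda>n. norm ((as n - a) * a)) \<longlonglongrightarrow> 0" using nu by (simp add: nu_conv_def)
  moreover have pos: "cmod l0 / (2 * (B + 1)) > 0" using l0ne B0 by (simp add: add_nonneg_pos)
  ultimately have "\<forall>\<^sub>F n in sequentially. dist (norm ((as n - a) * a)) 0 < cmod l0 / (2 * (B + 1))"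
    by (rule tendstoD)
  then have "\<forall>\<^sub>F n in sequentially. norm ((as n - a) * a) < cmod l0 / (2 * (B + 1))"
    by (simp add: dist_norm)
  then obtain n2 where n2: "\<forall>n\<ge>n2. norm ((as n - a) * a) < cmod l0 / (2 * (B + 1))"
    by (auto simp: eventually_sequentially)
  have main: "\<exists>C\<in>components (spectrum (as n)). C \<subseteq> U" if n: "n \<ge> max n1 n2" for n
  proof -
    have n1': "\<forall>z\<in>frontier W. z \<notin> spectrum (as n) \<and> norm (res (as n) z) \<le> B"
      using n1 n by (force simp: B_def intro: le_max_iff_disj[THEN iffD2])
    have "spectrum (as n) \<inter> W \<noteq> {}"
    proof
      assume e: "spectrum (as n) \<inter> W = {}"
      have allinv: "\<forall>z\<in>closure W. z \<notin> spectrum (as n)"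
        using e n1' by (auto simp: closure_Un_frontier)
      have "\<forall>z\<in>closure W. norm (res (as n) z) \<le> B"
        by (rule max_principle[OF bounded_subset[OF Wb closure_subset] Wo allinv]) (use n1' in auto)
      then have Rb: "norm (res (as n) l0) \<le> B" using l0(1) KW closure_subset by blast
      have inv: "l0 \<notin> spectrum (as n)" using allinv l0(1) KW closure_subset by blast
      have "cmod l0 < 3 * t * (1 + B * norm a) + B * norm ((as n - a) * a)"
        by (rule contra_step[OF l0S t0 mu inv Rb])
      moreover have "B * norm ((as n - a) * a) \<le> cmod l0 / 2"
      proof -
        have "norm ((as n - a) * a) \<le> cmod l0 / (2 * (B + 1))" using n2 n by (auto intro: less_imp_le)
        then have "B * norm ((as n - a) * a) \<le> B * (cmod l0 / (2 * (B + 1)))"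
          using B0 by (intro mult_left_mono) auto
        also have "\<dots> \<le> cmod l0 / 2" using B0 by (simp add: field_simps)
        finally show ?thesis .
      qed
      moreover have "cmod l0 > 0" using l0ne by simp
      ultimately show False using t3 by linarith
    qed
    then obtain mu where mu: "mu \<in> spectrum (as n)" "mu \<in> W" by blast
    define C' where "C' = connected_component_set (spectrum (as n)) mu"
    have C'c: "C' \<in> components (spectrum (as n))" using mu(1) by (auto simp: components_iff C'_def)
    have C'W: "C' \<subseteq> W"
    proof (rule ccontr)
      assume "\<not> C' \<subseteq> W"
      then have "C' - W \<noteq> {}" by blast
      moreover have "mu \<in> C'" using mu(1) by (simp add: C'_def connected_component_refl)
      then have "C' \<inter> W \<noteq> {}" using mu(2) by blast
      ultimately have "C' \<inter> frontier W \<noteq> {}"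
        using connected_Int_frontier[of C' W] by (simp add: C'_def)
      moreover have "C' \<subseteq> spectrum (as n)" by (simp add: C'_def connected_component_subset)
      ultimately show False using n1' by blast
    qed
    then have "C' \<subseteq> U" using closure_subset cWU by blast
    then show ?thesis using C'c by blast
  qed
  then show ?thesis by blast
qed

end
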